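(* Every linear BCK-algebra $\mathcal A$ of order $n$ satisfies $\operatorname{id}(\mathcal A)\ge\frac{n^2+3n-2}{2n^2}$, and for every $n\ge3$ equality holds for $\mathcal C_n$: $\operatorname{id}(\mathcal C_n)=\frac{n^2+3n-2}{2n^2}$. In particular every finite linear BCK-algebra $\mathcal A$ satisfies $\frac12<\operatorname{id}(\mathcal A)\le1$.
   Context: A BCK-algebra is a set $A$ with a binary operation $\cdot$ and a constant $0$ such that for all $x,y,z\in A$: (BCK1) $((x\cdot y)\cdot(x\cdot z))\cdot(z\cdot y)=0$; (BCK2) $(x\cdot(x\cdot y))\cdot y=0$; (BCK3) $x\cdot x=0$; (BCK4) $0\cdot x=0$; (BCK5) $x\cdot y=0$ and $y\cdot x=0$ imply $x=y$. The order $x\le y$ iff $x\cdot y=0$; the algebra is linear if this order is a chain. For finite $\mathcal A$, $\operatorname{id}(\mathcal A)=|\{(x,y)\in A^2:x\cdot(y\cdot x)=x\}|/|A|^2$. For $n\ge2$, $\mathcal C_n$ is the BCK-algebra with carrier $\{0,1,\dots,n-1\}$ and $x\cdot y=\max\{x-y,0\}$. *)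

theory Defs
  imports Complex_Main
begin

definition bck_algebra :: "'a set \<Rightarrow> ('a \<Rightarrow> 'a \<Rightarrow> 'a) \<Rightarrow> 'a \<Rightarrow> bool" where
  "bck_algebra A mul z \<longleftrightarrow>
     z \<in> A \<and> (\<forall>x\<in>A. \<forall>y\<in>A. mul x y \<in> A) \<and>
     (\<forall>x\<in>A. \<forall>y\<in>A. \<forall>w\<in>A. mul (mul (mul x y) (mul x w)) (mul w y) = z) \<and>
     (\<forall>x\<in>A. \<forall>y\<in>A. mul (mul x (mul x y)) y = z) \<and>
     (\<forall>x\<in>A. mul x x = z) \<and>
     (\<forall>x\<in>A. mul z x = z) \<and>
     (\<forall>x\<in>A. \<forall>y\<in>A. mul x y = z \<and> mul y x = z \<longrightarrow> x = y)"

definition bck_le :: "('a \<Rightarrow> 'a \<Rightarrow> 'a) \<Rightarrow> 'a \<Rightarrow> 'a \<Rightarrow> 'a \<Rightarrow> bool" where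
  "bck_le mul z x y \<longleftrightarrow> mul x y = z"

definition linear_bck :: "'a set \<Rightarrow> ('a \<Rightarrow> 'a \<Rightarrow> 'a) \<Rightarrow> 'a \<Rightarrow> bool" where
  "linear_bck A mul z \<longleftrightarrow> (\<forall>x\<in>A. \<forall>y\<in>A. bck_le mul z x y \<or> bck_le mul z y x)"

definition id_deg :: "'a set \<Rightarrow> ('a \<Rightarrow> 'a \<Rightarrow> 'a) \<Rightarrow> real" where
  "id_deg A mul = real (card {(x, y). x \<in> A \<and> y \<in> A \<and> mul x (mul y x) = x}) / real (card A) ^ 2"

definition C_carrier :: "nat \<Rightarrow> int set" where
  "C_carrier n = {0..<int n}"

definition C_mul :: "int \<Rightarrow> int \<Rightarrow> int" where
  "C_mul x y = max (x - y) 0"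

end

theory Submission imports Defs begin

lemma card_le_pairs:
  fixes R :: "'a \<Rightarrow> 'a \<Rightarrow> bool"
  assumes fin: "finite A"
    and refl: "\<forall>x\<in>A. R x x"
    and tot: "\<forall>x\<in>A. \<forall>y\<in>A. R x y \<or> R y x"
    and anti: "\<forall>x\<in>A. \<forall>y\<in>A. R x y \<and> R y x \<longrightarrow> x = y"
  shows "2 * card {(x, y). x \<in> A \<and> y \<in> A \<and> R y x} = card A ^ 2 + card A"
proof -
  define D where "D = (\<lambda>x. (x, x)) ` A"
  define S' where "S' = {(x, y). x \<in> A \<and> y \<in> A \<and> x \<noteq> y \<and> R y x}"
  define O' where "O' = A \<times> A - D"
  have fD: "finite D" using fin D_def by simp
  have fS: "finite S'" by (rule finite_subset[of _ "A \<times> A"]) (auto simp: S'_def fin)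
  have cD: "card D = card A" unfolding D_def by (rule card_image) (simp add: inj_on_def)
  have sw: "prod.swap ` S' = {(x, y). x \<in> A \<and> y \<in> A \<and> x \<noteq> y \<and> R x y}"
    by (auto simp: S'_def image_iff)
  have csw: "card (prod.swap ` S') = card S'" by (rule card_image) (auto simp: inj_on_def)
  have un: "S' \<union> prod.swap ` S' = O'" unfolding sw using tot by (auto simp: S'_def O'_def D_def)
  have dj: "S' \<inter> prod.swap ` S' = {}" unfolding sw using anti by (auto simp: S'_def)
  have "card O' = card S' + card S'"
    using card_Un_disjoint[of S' "prod.swap ` S'"] fS dj un csw by simp
  moreover have "card O' = card A ^ 2 - card A"
  proof -
    have "D \<subseteq> A \<times> A" by (auto simp: D_def)
    hence "card O' = card (A \<times> A) - card D" unfolding O'_def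
      by (rule card_Diff_subset[OF fD])
    thus ?thesis using cD by (simp add: card_cartesian_product power2_eq_square)
  qed
  moreover have "{(x, y). x \<in> A \<and> y \<in> A \<and> R y x} = D \<union> S'"
    using refl by (auto simp: D_def S'_def)
  moreover have "D \<inter> S' = {}" by (auto simp: D_def S'_def)
  moreover have "card A \<le> card A ^ 2" by (simp add: power2_eq_square)
  ultimately show ?thesis using card_Un_disjoint[OF fD fS] cD by simp
qed

lemma bck_x0:
  assumes "bck_algebra A mul z" "x \<in> A"
  shows "mul x z = x"
proof -
  have zA: "z \<in> A" and cl: "\<forall>x\<in>A. \<forall>y\<in>A. mul x y \<in> A"
    and b2: "\<forall>x\<in>A. \<forall>y\<in>A. mul (mul x (mul x y)) y = z"
    and b3: "\<forall>x\<in>A. mul x x = z" and b4: "\<forall>x\<in>A. mul z x = z"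
    and b5: "\<forall>x\<in>A. \<forall>y\<in>A. mul x y = z \<and> mul y x = z \<longrightarrow> x = y"
    using assms(1) unfolding bck_algebra_def by blast+
  have x0: "mul x z \<in> A" using cl zA assms(2) by blast
  have aA: "mul x (mul x z) \<in> A" using cl x0 assms(2) by blast
  have "mul (mul x (mul x z)) z = z" using b2 assms(2) zA by blast
  moreover have "mul z (mul x (mul x z)) = z" using b4 aA by blast
  ultimately have a: "mul x (mul x z) = z" using b5 aA zA by blast
  have "mul (mul x (mul x x)) x = z" using b2 assms(2) by blast
  hence "mul (mul x z) x = z" using b3 assms(2) by simp
  thus ?thesis using a b5 x0 assms(2) by blast
qed


lemma general_count:
  assumes fin: "finite A" and bck: "bck_algebra A mul z" and lin: "linear_bck A mul z"
  defines "S \<equiv> {(x, y). x \<in> A \<and> y \<in> A \<and> mul y x = z}"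
  defines "P \<equiv> {z} \<times> (A - {z})"
  shows "S \<union> P \<subseteq> {(x, y). x \<in> A \<and> y \<in> A \<and> mul x (mul y x) = x}"
    and "2 * card (S \<union> P) + 2 = card A ^ 2 + 3 * card A"
    and "card A \<ge> 1"
proof -
  have zA: "z \<in> A" and cl: "\<forall>x\<in>A. \<forall>y\<in>A. mul x y \<in> A"
    and b3: "\<forall>x\<in>A. mul x x = z" and b4: "\<forall>x\<in>A. mul z x = z"
    and b5: "\<forall>x\<in>A. \<forall>y\<in>A. mul x y = z \<and> mul y x = z \<longrightarrow> x = y"
    using bck unfolding bck_algebra_def by blast+
  have x0: "\<And>x. x \<in> A \<Longrightarrow> mul x z = x" using bck_x0[OF bck] .
  show "S \<union> P \<subseteq> {(x, y). x \<in> A \<and> y \<in> A \<and> mul x (mul y x) = x}"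
    using x0 b4 cl zA unfolding S_def P_def by auto
  show c1: "card A \<ge> 1" using zA fin by (metis One_nat_def Suc_leI card_gt_0_iff empty_iff)
  have cS: "2 * card S = card A ^ 2 + card A"
    unfolding S_def
    by (rule card_le_pairs[OF fin, of "\<lambda>a b. mul a b = z"])
       (use b3 b5 lin in \<open>auto simp: linear_bck_def bck_le_def\<close>)
  have fS: "finite S" by (rule finite_subset[of _ "A \<times> A"]) (auto simp: S_def fin)
  have fP: "finite P" using fin by (simp add: P_def)
  have cP: "card P = card A - 1" using fin zA by (simp add: P_def card_cartesian_product)
  have dj: "S \<inter> P = {}" using x0 zA unfolding S_def P_def by auto
  have "card (S \<union> P) = card S + card P" using card_Un_disjoint[OF fS fP dj] .
  thus "2 * card (S \<union> P) + 2 = card A ^ 2 + 3 * card A" using cS cP c1 by simp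
qed

lemma C_bck: assumes "n \<ge> 1" shows "bck_algebra (C_carrier n) C_mul 0"
  using assms unfolding bck_algebra_def C_carrier_def C_mul_def
  apply (intro conjI ballI impI)
  apply (simp_all only: atLeastLessThan_iff)
  by (simp_all add: max_def split: if_splits)

lemma C_lin: "linear_bck (C_carrier n) C_mul 0"
  unfolding linear_bck_def bck_le_def C_carrier_def C_mul_def by auto

lemma C_id: assumes n1: "n \<ge> 1"
  shows "id_deg (C_carrier n) C_mul = (real n ^ 2 + 3 * real n - 2) / (2 * real n ^ 2)"
proof -
  let ?A = "C_carrier n"
  define S where "S = {(x, y). x \<in> ?A \<and> y \<in> ?A \<and> C_mul y x = 0}"
  define P where "P = {0::int} \<times> (?A - {0})"
  have fin: "finite ?A" by (simp add: C_carrier_def)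
  note g = general_count[OF fin C_bck[OF n1] C_lin, folded S_def P_def]
  have "{(x, y). x \<in> ?A \<and> y \<in> ?A \<and> C_mul x (C_mul y x) = x} \<subseteq> S \<union> P"
    unfolding S_def P_def C_carrier_def C_mul_def by (auto simp: max_def split: if_splits)
  hence eq: "{(x, y). x \<in> ?A \<and> y \<in> ?A \<and> C_mul x (C_mul y x) = x} = S \<union> P" using g(1) by blast
  have cA: "card ?A = n" by (simp add: C_carrier_def)
  have "2 * real (card (S \<union> P)) + 2 = real n ^ 2 + 3 * real n"
    using g(2) cA by (metis of_nat_add of_nat_mult of_nat_numeral of_nat_power)
  with n1 show ?thesis unfolding id_deg_def eq cA
    by (simp add: field_simps)
qed

theorem mainTheorem19:
  fixes A :: "'a set" and mul :: "'a \<Rightarrow> 'a \<Rightarrow> 'a" and z :: 'a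
  shows "(finite A \<and> bck_algebra A mul z \<and> linear_bck A mul z \<longrightarrow>
            id_deg A mul \<ge> (real (card A) ^ 2 + 3 * real (card A) - 2) / (2 * real (card A) ^ 2))
       \<and> (\<forall>n::nat. n \<ge> 3 \<longrightarrow>
            bck_algebra (C_carrier n) C_mul 0 \<and> linear_bck (C_carrier n) C_mul 0 \<and>
            id_deg (C_carrier n) C_mul = (real n ^ 2 + 3 * real n - 2) / (2 * real n ^ 2))
       \<and> (finite A \<and> bck_algebra A mul z \<and> linear_bck A mul z \<longrightarrow>
            1/2 < id_deg A mul \<and> id_deg A mul \<le> 1)"
proof (intro conjI impI allI)
  fix n :: nat
  assume n3: "n \<ge> 3"
  show "bck_algebra (C_carrier n) C_mul 0" using n3 by (intro C_bck) simp
  show "linear_bck (C_carrier n) C_mul 0" by (rule C_lin)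
  show "id_deg (C_carrier n) C_mul = (real n ^ 2 + 3 * real n - 2) / (2 * real n ^ 2)" using n3 by (intro C_id) simp
next
  assume h: "finite A \<and> bck_algebra A mul z \<and> linear_bck A mul z"
  define S where "S = {(x, y). x \<in> A \<and> y \<in> A \<and> mul y x = z}"
  define P where "P = {z} \<times> (A - {z})"
  define T where "T = {(x, y). x \<in> A \<and> y \<in> A \<and> mul x (mul y x) = x}"
  have hA: "finite A" and hB: "bck_algebra A mul z" and hC: "linear_bck A mul z" using h by auto
  note g = general_count[OF hA hB hC, folded S_def P_def T_def]
  have sub: "S \<union> P \<subseteq> T" using g(1) .
  have fT: "finite T" by (rule finite_subset[of _ "A \<times> A"]) (use hA in \<open>auto simp: T_def\<close>)
  have le: "card (S \<union> P) \<le> card T" using card_mono[OF fT sub] .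
  have le2: "card T \<le> card A ^ 2"
  proof -
    have "card T \<le> card (A \<times> A)" by (rule card_mono) (use hA in \<open>auto simp: T_def\<close>)
    thus ?thesis by (simp add: card_cartesian_product power2_eq_square)
  qed
  have c2: "2 * real (card (S \<union> P)) + 2 = real (card A) ^ 2 + 3 * real (card A)"
  proof -
    have "real (2 * card (S \<union> P) + 2) = real (card A ^ 2 + 3 * card A)" using g(2) by simp
    thus ?thesis by simp
  qed
  have n1: "real (card A) \<ge> 1" using g(3) by simp
  have leR: "real (card (S \<union> P)) \<le> real (card T)" using le by simp
  have le2R: "real (card T) \<le> real (card A) ^ 2" using le2 by (metis of_nat_le_iff of_nat_power)
  have idd: "id_deg A mul = real (card T) / real (card A) ^ 2" by (simp add: id_deg_def T_def)
  have pos: "real (card A) ^ 2 > 0" using n1 by simp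
  define N where "N = real (card A)"
  define t where "t = real (card T)"
  have pos': "N ^ 2 > 0" using pos N_def by simp
  have k: "N ^ 2 + 3 * N - 2 \<le> 2 * t" using c2 leR unfolding N_def t_def by linarith
  have e: "t / N ^ 2 = (2 * t) / (2 * N ^ 2)" by simp
  have "(N ^ 2 + 3 * N - 2) / (2 * N ^ 2) \<le> (2 * t) / (2 * N ^ 2)"
    by (rule divide_right_mono[OF k]) (use pos' in simp)
  hence "(N ^ 2 + 3 * N - 2) / (2 * N ^ 2) \<le> t / N ^ 2" using e by linarith
  thus "id_deg A mul \<ge> (real (card A) ^ 2 + 3 * real (card A) - 2) / (2 * real (card A) ^ 2)"
    unfolding idd by (simp only: N_def t_def)
  have "t / N ^ 2 \<le> N ^ 2 / N ^ 2"
    by (rule divide_right_mono) (use le2R pos' in \<open>simp_all add: N_def t_def\<close>)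
  thus "id_deg A mul \<le> 1" unfolding idd using pos' by (simp add: N_def t_def)
  have n1': "N \<ge> 1" using n1 N_def by simp
  have "N ^ 2 < N ^ 2 + 3 * N - 2" using n1' by linarith
  hence "N ^ 2 < 2 * t" using k by linarith
  hence "N ^ 2 / (2 * N ^ 2) < (2 * t) / (2 * N ^ 2)"
    by (rule divide_strict_right_mono) (use pos' in simp)
  moreover have "N ^ 2 / (2 * N ^ 2) = 1/2" using pos' by simp
  ultimately have "1/2 < t / N ^ 2" using e by linarith
  thus "1/2 < id_deg A mul" unfolding idd by (simp only: N_def t_def)
qed

end
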